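(* Let $\alpha:[-1,1]\times[0,T)\to\mathbb{R}^2$ be a smooth solution of the curve diffusion flow $\partial_t\alpha=k_{ss}\nu$ with generalised Neumann boundary conditions in the cone. Then for every $\ell\in\mathbb{N}$ and every $t\in[0,T)$, $k_{s^{2\ell-1}}(\pm1,t)=0$ (one-sided arclength derivatives).
   Context: Fix angles $0\le\theta_2<\theta_1<\pi$ and the rays $\bar\gamma_i=\{\rho(\cos\theta_i,\sin\theta_i):\rho>0\}$, $i=1,2$, forming a cone with tip at the origin. For a family of curves $\alpha(\cdot,t)$, $s$ is arclength, $\nu$ the outer unit normal, $k=-\langle\alpha_{ss},\nu\rangle$ the scalar curvature and $k_{s^m}$ its $m$-th arclength derivative. Generalised Neumann boundary conditions mean: for all $t$, $\alpha(-1,t)\in\bar\gamma_1$, $\alpha(1,t)\in\bar\gamma_2$, the curve meets these rays perpendicularly (the normal $\nu$ is tangent to the ray at each endpoint), and $k_s(\pm1,t)=0$. *)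

theory Defs
  imports "HOL-Analysis.Analysis"
begin

text \<open>Curves in the plane are maps from the parameter strip [-1,1] x [0,T) to
  R^2 = real x real; a point of the strip is a pair (u,t).\<close>

definition strip :: "real \<Rightarrow> (real \<times> real) set" where
  "strip T = {-1..1} \<times> {0..<T}"

definition dU :: "(real \<times> real \<Rightarrow> 'a::real_normed_vector) \<Rightarrow> real \<times> real \<Rightarrow> 'a" where
  "dU f p = vector_derivative (\<lambda>v. f (v, snd p)) (at (fst p) within {-1..1})"

definition dT :: "real \<Rightarrow> (real \<times> real \<Rightarrow> 'a::real_normed_vector) \<Rightarrow> real \<times> real \<Rightarrow> 'a" where
  "dT T f p = vector_derivative (\<lambda>s. f (fst p, s)) (at (snd p) within {0..<T})"

fun pd :: "real \<Rightarrow> bool list \<Rightarrow> (real \<times> real \<Rightarrow> 'a::real_normed_vector) \<Rightarrow> real \<times> real \<Rightarrow> 'a" where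
  "pd T [] f = f"
| "pd T (b # bs) f = (if b then dU (pd T bs f) else dT T (pd T bs f))"

definition smooth_on_strip :: "real \<Rightarrow> (real \<times> real \<Rightarrow> 'a::real_normed_vector) \<Rightarrow> bool" where
  "smooth_on_strip T f \<longleftrightarrow>
     (\<forall>bs. continuous_on (strip T) (pd T bs f) \<and>
        (\<forall>p\<in>strip T.
           ((\<lambda>v. pd T bs f (v, snd p)) has_vector_derivative dU (pd T bs f) p) (at (fst p) within {-1..1}) \<and>
           ((\<lambda>s. pd T bs f (fst p, s)) has_vector_derivative dT T (pd T bs f) p) (at (snd p) within {0..<T})))"

definition dS :: "(real \<times> real \<Rightarrow> real \<times> real) \<Rightarrow> (real \<times> real \<Rightarrow> 'a::real_normed_vector) \<Rightarrow> real \<times> real \<Rightarrow> 'a" where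
  "dS \<alpha> f p = inverse (norm (dU \<alpha> p)) *\<^sub>R dU f p"

definition rotJ :: "real \<times> real \<Rightarrow> real \<times> real" where
  "rotJ v = (- snd v, fst v)"

text \<open>The curve runs from the ray at angle theta1
  (u = -1) to the ray at angle theta2 < theta1 (u = 1), i.e. clockwise about the
  tip of the cone, so the outer normal is the counterclockwise rotation of the tangent.\<close>
definition tangent :: "(real \<times> real \<Rightarrow> real \<times> real) \<Rightarrow> real \<times> real \<Rightarrow> real \<times> real" where
  "tangent \<alpha> p = dS \<alpha> \<alpha> p"

definition normal :: "(real \<times> real \<Rightarrow> real \<times> real) \<Rightarrow> real \<times> real \<Rightarrow> real \<times> real" where
  "normal \<alpha> p = rotJ (tangent \<alpha> p)"

definition curv :: "(real \<times> real \<Rightarrow> real \<times> real) \<Rightarrow> real \<times> real \<Rightarrow> real" where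
  "curv \<alpha> p = - inner (dS \<alpha> (dS \<alpha> \<alpha>) p) (normal \<alpha> p)"

definition curv_s :: "(real \<times> real \<Rightarrow> real \<times> real) \<Rightarrow> nat \<Rightarrow> real \<times> real \<Rightarrow> real" where
  "curv_s \<alpha> m = (dS \<alpha> ^^ m) (curv \<alpha>)"

definition ray :: "real \<Rightarrow> (real \<times> real) set" where
  "ray \<theta> = {(\<rho> * cos \<theta>, \<rho> * sin \<theta>) | \<rho>. \<rho> > 0}"

definition CDF_GNBC :: "real \<Rightarrow> real \<Rightarrow> real \<Rightarrow> (real \<times> real \<Rightarrow> real \<times> real) \<Rightarrow> bool" where
  "CDF_GNBC \<theta>1 \<theta>2 T \<alpha> \<longleftrightarrow>
     smooth_on_strip T \<alpha> \<and>
     (\<forall>p\<in>strip T. dU \<alpha> p \<noteq> 0) \<and>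
     (\<forall>p\<in>strip T. dT T \<alpha> p = curv_s \<alpha> 2 p *\<^sub>R normal \<alpha> p) \<and>
     (\<forall>t\<in>{0..<T}.
        \<alpha> (-1, t) \<in> ray \<theta>1 \<and> \<alpha> (1, t) \<in> ray \<theta>2 \<and>
        (\<exists>c. normal \<alpha> (-1, t) = c *\<^sub>R (cos \<theta>1, sin \<theta>1)) \<and>
        (\<exists>c. normal \<alpha> (1, t) = c *\<^sub>R (cos \<theta>2, sin \<theta>2)) \<and>
        curv_s \<alpha> 1 (-1, t) = 0 \<and> curv_s \<alpha> 1 (1, t) = 0)"

end

theory Submission
  imports Defs
begin


definition eqS :: "real \<Rightarrow> (real\<times>real \<Rightarrow> 'a) \<Rightarrow> (real\<times>real \<Rightarrow> 'a) \<Rightarrow> bool" where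
  "eqS T f g \<longleftrightarrow> (\<forall>p\<in>strip T. f p = g p)"

lemma strip_iff: "p \<in> strip T \<longleftrightarrow> fst p \<in> {-1..1} \<and> snd p \<in> {0..<T}"
  by (cases p) (auto simp: strip_def)

lemma eqS_refl[simp]: "eqS T f f" by (simp add: eqS_def)
lemma eqS_sym: "eqS T f g \<Longrightarrow> eqS T g f" by (simp add: eqS_def)
lemma eqS_trans: "eqS T f g \<Longrightarrow> eqS T g h \<Longrightarrow> eqS T f h" by (simp add: eqS_def)

lemma dU_cong: assumes "eqS T f g" "p \<in> strip T" shows "dU f p = dU g p"
proof -
  have "\<And>v. v \<in> {-1..1} \<Longrightarrow> f (v, snd p) = g (v, snd p)"
    using assms by (auto simp: eqS_def strip_iff)
  moreover have "fst p \<in> {-1..1}" using assms(2) by (simp add: strip_iff)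
  ultimately have "\<And>D. ((\<lambda>v. f (v, snd p)) has_vector_derivative D) (at (fst p) within {-1..1}) \<longleftrightarrow> ((\<lambda>v. g (v, snd p)) has_vector_derivative D) (at (fst p) within {-1..1})"
    using has_vector_derivative_transform[of "fst p" "{-1..1}"] by (metis (no_types, lifting))
  thus ?thesis by (simp add: dU_def vector_derivative_def)
qed

lemma dT_cong: assumes "eqS T f g" "p \<in> strip T" shows "dT T f p = dT T g p"
proof -
  have "\<And>s. s \<in> {0..<T} \<Longrightarrow> f (fst p, s) = g (fst p, s)"
    using assms by (auto simp: eqS_def strip_iff)
  moreover have "snd p \<in> {0..<T}" using assms(2) by (simp add: strip_iff)
  ultimately have "\<And>D. ((\<lambda>s. f (fst p, s)) has_vector_derivative D) (at (snd p) within {0..<T}) \<longleftrightarrow> ((\<lambda>s. g (fst p, s)) has_vector_derivative D) (at (snd p) within {0..<T})"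
    using has_vector_derivative_transform[of "snd p" "{0..<T}"] by (metis (no_types, lifting))
  thus ?thesis by (simp add: dT_def vector_derivative_def)
qed

lemma eqS_dU: "eqS T f g \<Longrightarrow> eqS T (dU f) (dU g)"
  using dU_cong unfolding eqS_def by blast
lemma eqS_dT: "eqS T f g \<Longrightarrow> eqS T (dT T f) (dT T g)"
  using dT_cong unfolding eqS_def by blast

lemma eqS_pd: "eqS T f g \<Longrightarrow> eqS T (pd T bs f) (pd T bs g)"
  by (induction bs) (auto simp: eqS_dU eqS_dT)

lemma pd_append: "pd T (bs @ [b]) f = pd T bs (if b then dU f else dT T f)"
  by (induction bs) auto


definition okS :: "real \<Rightarrow> (real\<times>real \<Rightarrow> 'a::real_normed_vector) \<Rightarrow> bool" where
 "okS T f \<longleftrightarrow> continuous_on (strip T) f \<and> (\<forall>p\<in>strip T.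
    ((\<lambda>v. f (v, snd p)) has_vector_derivative dU f p) (at (fst p) within {-1..1}) \<and>
    ((\<lambda>s. f (fst p, s)) has_vector_derivative dT T f p) (at (snd p) within {0..<T}))"

lemma smooth_okS: "smooth_on_strip T f \<longleftrightarrow> (\<forall>bs. okS T (pd T bs f))"
  by (simp add: smooth_on_strip_def okS_def)

lemma okS_cong: assumes "eqS T f g" "okS T f" shows "okS T g"
proof -
  have c: "continuous_on (strip T) g"
    using assms continuous_on_cong unfolding okS_def eqS_def by blast
  { fix p assume p: "p \<in> strip T"
    have e1: "\<And>v. v \<in> {-1..1} \<Longrightarrow> g (v, snd p) = f (v, snd p)"
      using assms p by (auto simp: eqS_def strip_iff)
    have d1: "((\<lambda>v. f (v, snd p)) has_vector_derivative dU g p) (at (fst p) within {-1..1})"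
      using assms p dU_cong[OF assms(1) p] by (auto simp: okS_def)
    have r1: "((\<lambda>v. g (v, snd p)) has_vector_derivative dU g p) (at (fst p) within {-1..1})"
      by (rule has_vector_derivative_transform[OF _ e1 d1]) (use p in \<open>simp add: strip_iff\<close>)
    have e2: "\<And>s. s \<in> {0..<T} \<Longrightarrow> g (fst p, s) = f (fst p, s)"
      using assms p by (auto simp: eqS_def strip_iff)
    have d2: "((\<lambda>s. f (fst p, s)) has_vector_derivative dT T g p) (at (snd p) within {0..<T})"
      using assms p dT_cong[OF assms(1) p] by (auto simp: okS_def)
    have r2: "((\<lambda>s. g (fst p, s)) has_vector_derivative dT T g p) (at (snd p) within {0..<T})"
      by (rule has_vector_derivative_transform[OF _ e2 d2]) (use p in \<open>simp add: strip_iff\<close>)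
    note r1 r2
  }
  thus ?thesis using c by (simp add: okS_def)
qed

definition CnS :: "real \<Rightarrow> nat \<Rightarrow> (real\<times>real \<Rightarrow> 'a::real_normed_vector) \<Rightarrow> bool" where
  "CnS T n f \<longleftrightarrow> (\<forall>bs. length bs \<le> n \<longrightarrow> okS T (pd T bs f))"

lemma smooth_CnS: "smooth_on_strip T f \<longleftrightarrow> (\<forall>n. CnS T n f)"
  unfolding smooth_okS CnS_def by blast

lemma CnS_cong: "eqS T f g \<Longrightarrow> CnS T n f \<Longrightarrow> CnS T n g"
  unfolding CnS_def by (meson eqS_pd okS_cong)

lemma CnS_0: "CnS T 0 f \<longleftrightarrow> okS T f"
  by (simp add: CnS_def)

lemma CnS_Suc: "CnS T (Suc n) f \<longleftrightarrow> okS T f \<and> CnS T n (dU f) \<and> CnS T n (dT T f)"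
proof
  assume a: "CnS T (Suc n) f"
  show "okS T f \<and> CnS T n (dU f) \<and> CnS T n (dT T f)"
    using a[unfolded CnS_def, rule_format, of "[]"]
      a[unfolded CnS_def, rule_format, of "_ @ [True]"]
      a[unfolded CnS_def, rule_format, of "_ @ [False]"]
    by (auto simp: CnS_def pd_append)
next
  assume a: "okS T f \<and> CnS T n (dU f) \<and> CnS T n (dT T f)"
  show "CnS T (Suc n) f" unfolding CnS_def
  proof (intro allI impI)
    fix bs :: "bool list" assume l: "length bs \<le> Suc n"
    show "okS T (pd T bs f)"
    proof (cases bs rule: rev_cases)
      case Nil then show ?thesis using a by simp
    next
      case (snoc ys y)
      then show ?thesis using a l by (cases y) (auto simp: CnS_def pd_append)
    qed
  qed
qed

lemma CnS_mono: "CnS T n f \<Longrightarrow> m \<le> n \<Longrightarrow> CnS T m f"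
  by (auto simp: CnS_def)



lemma at_Ico_nbot: "0 < (T::real) \<Longrightarrow> t \<in> {0..<T} \<Longrightarrow> at t within {0..<T} \<noteq> bot"
  using islimpt_Ico[of 0 T t] by (auto simp: trivial_limit_within)

lemma at_Icc_nbot: "u \<in> {-1..1} \<Longrightarrow> at u within {-1..1::real} \<noteq> bot"
  by (simp add: trivial_limit_within)

lemma dU_eq: "p \<in> strip T \<Longrightarrow> ((\<lambda>v. f (v, snd p)) has_vector_derivative D) (at (fst p) within {-1..1}) \<Longrightarrow> dU f p = D"
  unfolding dU_def by (rule vector_derivative_within) (auto simp: strip_iff at_Icc_nbot)

lemma dT_eq: "0 < T \<Longrightarrow> p \<in> strip T \<Longrightarrow> ((\<lambda>s. f (fst p, s)) has_vector_derivative D) (at (snd p) within {0..<T}) \<Longrightarrow> dT T f p = D"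
  unfolding dT_def by (rule vector_derivative_within) (auto simp: strip_iff at_Ico_nbot)

lemma okS_intro:
  assumes T: "0 < T" and c: "continuous_on (strip T) h"
    and u: "\<And>p. p \<in> strip T \<Longrightarrow> ((\<lambda>v. h (v, snd p)) has_vector_derivative DU p) (at (fst p) within {-1..1})"
    and t: "\<And>p. p \<in> strip T \<Longrightarrow> ((\<lambda>s. h (fst p, s)) has_vector_derivative DT p) (at (snd p) within {0..<T})"
  shows "okS T h \<and> eqS T (dU h) DU \<and> eqS T (dT T h) DT"
proof -
  have a: "eqS T (dU h) DU" using u dU_eq unfolding eqS_def by blast
  have b: "eqS T (dT T h) DT" using t dT_eq[OF T] unfolding eqS_def by blast
  show ?thesis using a b c u t unfolding okS_def eqS_def by simp
qed

lemma okS_uD: "okS T f \<Longrightarrow> p \<in> strip T \<Longrightarrow> ((\<lambda>v. f (v, snd p)) has_vector_derivative dU f p) (at (fst p) within {-1..1})"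
  by (simp add: okS_def)
lemma okS_tD: "okS T f \<Longrightarrow> p \<in> strip T \<Longrightarrow> ((\<lambda>s. f (fst p, s)) has_vector_derivative dT T f p) (at (snd p) within {0..<T})"
  by (simp add: okS_def)
lemma okS_cD: "okS T f \<Longrightarrow> continuous_on (strip T) f"
  by (simp add: okS_def)

lemma okS_const: "0 < T \<Longrightarrow> okS T (\<lambda>p. c) \<and> eqS T (dU (\<lambda>p. c)) (\<lambda>p. 0) \<and> eqS T (dT T (\<lambda>p. c)) (\<lambda>p. 0)"
  by (rule okS_intro) auto

lemma okS_add: assumes T: "0 < T" and f: "okS T f" and g: "okS T g"
  shows "okS T (\<lambda>p. f p + g p) \<and> eqS T (dU (\<lambda>p. f p + g p)) (\<lambda>p. dU f p + dU g p) \<and> eqS T (dT T (\<lambda>p. f p + g p)) (\<lambda>p. dT T f p + dT T g p)"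
  by (rule okS_intro[OF T])
    (use okS_cD[OF f] okS_cD[OF g] in \<open>auto intro!: continuous_intros has_vector_derivative_add okS_uD okS_tD f g\<close>)

lemma okS_mult: fixes f g :: "real\<times>real \<Rightarrow> real"
  assumes T: "0 < T" and f: "okS T f" and g: "okS T g"
  shows "okS T (\<lambda>p. f p * g p) \<and> eqS T (dU (\<lambda>p. f p * g p)) (\<lambda>p. f p * dU g p + dU f p * g p) \<and> eqS T (dT T (\<lambda>p. f p * g p)) (\<lambda>p. f p * dT T g p + dT T f p * g p)"
proof (rule okS_intro[OF T])
  show "continuous_on (strip T) (\<lambda>p. f p * g p)" using okS_cD[OF f] okS_cD[OF g] by (auto intro!: continuous_intros)
  fix p assume p: "p \<in> strip T"
  show "((\<lambda>v. f (v, snd p) * g (v, snd p)) has_vector_derivative f p * dU g p + dU f p * g p) (at (fst p) within {-1..1})"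
    using has_vector_derivative_mult[OF okS_uD[OF f p] okS_uD[OF g p]] by simp
  show "((\<lambda>s. f (fst p, s) * g (fst p, s)) has_vector_derivative f p * dT T g p + dT T f p * g p) (at (snd p) within {0..<T})"
    using has_vector_derivative_mult[OF okS_tD[OF f p] okS_tD[OF g p]] by simp
qed

lemma okS_powr: fixes h :: "real\<times>real \<Rightarrow> real"
  assumes T: "0 < T" and h: "okS T h" and pos: "\<And>p. p \<in> strip T \<Longrightarrow> h p > 0"
  shows "okS T (\<lambda>p. h p powr r) \<and> eqS T (dU (\<lambda>p. h p powr r)) (\<lambda>p. r * h p powr (r - 1) * dU h p) \<and> eqS T (dT T (\<lambda>p. h p powr r)) (\<lambda>p. r * h p powr (r - 1) * dT T h p)"
proof (rule okS_intro[OF T])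
  show "continuous_on (strip T) (\<lambda>p. h p powr r)" using okS_cD[OF h] pos
    by (auto intro!: continuous_intros simp: less_imp_neq[symmetric])
  fix p assume p: "p \<in> strip T"
  have hp: "h (fst p, snd p) > 0" using pos p by simp
  show "((\<lambda>v. h (v, snd p) powr r) has_vector_derivative r * h p powr (r - 1) * dU h p) (at (fst p) within {-1..1})"
  proof -
    have d: "((\<lambda>v. h (v, snd p)) has_real_derivative dU h p) (at (fst p) within {-1..1})"
      using okS_uD[OF h p] by (simp add: has_real_derivative_iff_has_vector_derivative)
    have "((\<lambda>v. h (v, snd p) powr r) has_real_derivative r * h (fst p, snd p) powr (r - 1) * dU h p) (at (fst p) within {-1..1})"
      using DERIV_chain2[OF has_real_derivative_powr[OF hp, of r] d] by simp
    thus ?thesis by (simp add: has_real_derivative_iff_has_vector_derivative)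
  qed
  show "((\<lambda>s. h (fst p, s) powr r) has_vector_derivative r * h p powr (r - 1) * dT T h p) (at (snd p) within {0..<T})"
  proof -
    have d: "((\<lambda>s. h (fst p, s)) has_real_derivative dT T h p) (at (snd p) within {0..<T})"
      using okS_tD[OF h p] by (simp add: has_real_derivative_iff_has_vector_derivative)
    have "((\<lambda>s. h (fst p, s) powr r) has_real_derivative r * h (fst p, snd p) powr (r - 1) * dT T h p) (at (snd p) within {0..<T})"
      using DERIV_chain2[OF has_real_derivative_powr[OF hp, of r] d] by simp
    thus ?thesis by (simp add: has_real_derivative_iff_has_vector_derivative)
  qed
qed

lemma okS_fst: fixes F :: "real\<times>real \<Rightarrow> 'a::real_normed_vector \<times> 'b::real_normed_vector"
  assumes T: "0 < T" and F: "okS T F"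
  shows "okS T (\<lambda>p. fst (F p)) \<and> eqS T (dU (\<lambda>p. fst (F p))) (\<lambda>p. fst (dU F p)) \<and> eqS T (dT T (\<lambda>p. fst (F p))) (\<lambda>p. fst (dT T F p))"
proof (rule okS_intro[OF T])
  show "continuous_on (strip T) (\<lambda>p. fst (F p))" using okS_cD[OF F] by (auto intro!: continuous_intros)
  fix p assume p: "p \<in> strip T"
  show "((\<lambda>v. fst (F (v, snd p))) has_vector_derivative fst (dU F p)) (at (fst p) within {-1..1})"
    by (rule bounded_linear.has_vector_derivative[OF bounded_linear_fst okS_uD[OF F p]])
  show "((\<lambda>s. fst (F (fst p, s))) has_vector_derivative fst (dT T F p)) (at (snd p) within {0..<T})"
    by (rule bounded_linear.has_vector_derivative[OF bounded_linear_fst okS_tD[OF F p]])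
qed

lemma okS_snd: fixes F :: "real\<times>real \<Rightarrow> 'a::real_normed_vector \<times> 'b::real_normed_vector"
  assumes T: "0 < T" and F: "okS T F"
  shows "okS T (\<lambda>p. snd (F p)) \<and> eqS T (dU (\<lambda>p. snd (F p))) (\<lambda>p. snd (dU F p)) \<and> eqS T (dT T (\<lambda>p. snd (F p))) (\<lambda>p. snd (dT T F p))"
proof (rule okS_intro[OF T])
  show "continuous_on (strip T) (\<lambda>p. snd (F p))" using okS_cD[OF F] by (auto intro!: continuous_intros)
  fix p assume p: "p \<in> strip T"
  show "((\<lambda>v. snd (F (v, snd p))) has_vector_derivative snd (dU F p)) (at (fst p) within {-1..1})"
    by (rule bounded_linear.has_vector_derivative[OF bounded_linear_snd okS_uD[OF F p]])
  show "((\<lambda>s. snd (F (fst p, s))) has_vector_derivative snd (dT T F p)) (at (snd p) within {0..<T})"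
    by (rule bounded_linear.has_vector_derivative[OF bounded_linear_snd okS_tD[OF F p]])
qed

lemma okS_pair: fixes X Y :: "real\<times>real \<Rightarrow> real"
  assumes T: "0 < T" and X: "okS T X" and Y: "okS T Y"
  shows "okS T (\<lambda>p. (X p, Y p)) \<and> eqS T (dU (\<lambda>p. (X p, Y p))) (\<lambda>p. (dU X p, dU Y p)) \<and> eqS T (dT T (\<lambda>p. (X p, Y p))) (\<lambda>p. (dT T X p, dT T Y p))"
proof (rule okS_intro[OF T])
  show "continuous_on (strip T) (\<lambda>p. (X p, Y p))" using okS_cD[OF X] okS_cD[OF Y] by (auto intro!: continuous_intros)
  fix p assume p: "p \<in> strip T"
  show "((\<lambda>v. (X (v, snd p), Y (v, snd p))) has_vector_derivative (dU X p, dU Y p)) (at (fst p) within {-1..1})"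
    by (rule has_vector_derivative_Pair[OF okS_uD[OF X p] okS_uD[OF Y p]])
  show "((\<lambda>s. (X (fst p, s), Y (fst p, s))) has_vector_derivative (dT T X p, dT T Y p)) (at (snd p) within {0..<T})"
    by (rule has_vector_derivative_Pair[OF okS_tD[OF X p] okS_tD[OF Y p]])
qed



lemma CnS_SucI: "okS T h \<and> eqS T (dU h) A \<and> eqS T (dT T h) B \<Longrightarrow> CnS T n A \<Longrightarrow> CnS T n B \<Longrightarrow> CnS T (Suc n) h"
  unfolding CnS_Suc using CnS_cong eqS_sym by blast

lemma CnS_const: assumes T: "0 < T" shows "CnS T n (\<lambda>p. c)"
proof (induction n arbitrary: c)
  case 0 show ?case using okS_const[OF T, of c] by (simp add: CnS_0)
next
  case (Suc n)
  have o: "okS T (\<lambda>p. c) \<and> eqS T (dU (\<lambda>p. c)) (\<lambda>p. 0) \<and> eqS T (dT T (\<lambda>p. c)) (\<lambda>p. 0)"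
    using okS_const[OF T] .
  show ?case by (rule CnS_SucI[OF o Suc.IH Suc.IH])
qed

lemma CnS_add: assumes T: "0 < T"
  shows "CnS T n f \<Longrightarrow> CnS T n g \<Longrightarrow> CnS T n (\<lambda>p. f p + g p)"
proof (induction n arbitrary: f g)
  case 0 thus ?case using okS_add[OF T, of f g] by (simp add: CnS_0)
next
  case (Suc n)
  have f: "okS T f" "CnS T n (dU f)" "CnS T n (dT T f)" using Suc.prems(1) by (auto simp: CnS_Suc)
  have g: "okS T g" "CnS T n (dU g)" "CnS T n (dT T g)" using Suc.prems(2) by (auto simp: CnS_Suc)
  have o: "okS T (\<lambda>p. f p + g p) \<and> eqS T (dU (\<lambda>p. f p + g p)) (\<lambda>p. dU f p + dU g p) \<and> eqS T (dT T (\<lambda>p. f p + g p)) (\<lambda>p. dT T f p + dT T g p)"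
    using okS_add[OF T f(1) g(1)] .
  show ?case by (rule CnS_SucI[OF o Suc.IH[OF f(2) g(2)] Suc.IH[OF f(3) g(3)]])
qed

lemma CnS_mult: fixes f g :: "real\<times>real \<Rightarrow> real" assumes T: "0 < T"
  shows "CnS T n f \<Longrightarrow> CnS T n g \<Longrightarrow> CnS T n (\<lambda>p. f p * g p)"
proof (induction n arbitrary: f g)
  case 0 thus ?case using okS_mult[OF T, of f g] by (simp add: CnS_0)
next
  case (Suc n)
  have f: "okS T f" "CnS T n (dU f)" "CnS T n (dT T f)" "CnS T n f" using Suc.prems(1) CnS_mono[OF Suc.prems(1), of n] by (auto simp: CnS_Suc)
  have g: "okS T g" "CnS T n (dU g)" "CnS T n (dT T g)" "CnS T n g" using Suc.prems(2) CnS_mono[OF Suc.prems(2), of n] by (auto simp: CnS_Suc)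
  have o: "okS T (\<lambda>p. f p * g p) \<and> eqS T (dU (\<lambda>p. f p * g p)) (\<lambda>p. f p * dU g p + dU f p * g p) \<and> eqS T (dT T (\<lambda>p. f p * g p)) (\<lambda>p. f p * dT T g p + dT T f p * g p)"
    using okS_mult[OF T f(1) g(1)] .
  have 1: "CnS T n (\<lambda>p. f p * dU g p + dU f p * g p)"
    using CnS_add[OF T Suc.IH[OF f(4) g(2)] Suc.IH[OF f(2) g(4)]] .
  have 2: "CnS T n (\<lambda>p. f p * dT T g p + dT T f p * g p)"
    using CnS_add[OF T Suc.IH[OF f(4) g(3)] Suc.IH[OF f(3) g(4)]] .
  show ?case by (rule CnS_SucI[OF o 1 2])
qed

lemma CnS_powr: fixes h :: "real\<times>real \<Rightarrow> real" assumes T: "0 < T"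
  and pos: "\<And>p. p \<in> strip T \<Longrightarrow> h p > 0"
  shows "CnS T n h \<Longrightarrow> CnS T n (\<lambda>p. h p powr r)"
proof (induction n arbitrary: r)
  case 0 thus ?case using okS_powr[OF T _ pos, where r=r] by (simp add: CnS_0)
next
  case (Suc n)
  have h: "okS T h" "CnS T n (dU h)" "CnS T n (dT T h)" "CnS T n h" using Suc.prems(1) CnS_mono[OF Suc.prems(1), of n] by (auto simp: CnS_Suc)
  have o: "okS T (\<lambda>p. h p powr r) \<and> eqS T (dU (\<lambda>p. h p powr r)) (\<lambda>p. r * h p powr (r - 1) * dU h p) \<and> eqS T (dT T (\<lambda>p. h p powr r)) (\<lambda>p. r * h p powr (r - 1) * dT T h p)"
    using okS_powr[OF T h(1) pos] .
  have 1: "CnS T n (\<lambda>p. r * h p powr (r - 1) * dU h p)"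
    using CnS_mult[OF T CnS_mult[OF T CnS_const[OF T] Suc.IH[OF h(4)]] h(2)] .
  have 2: "CnS T n (\<lambda>p. r * h p powr (r - 1) * dT T h p)"
    using CnS_mult[OF T CnS_mult[OF T CnS_const[OF T] Suc.IH[OF h(4)]] h(3)] .
  show ?case by (rule CnS_SucI[OF o 1 2])
qed

lemma CnS_fst: fixes F :: "real\<times>real \<Rightarrow> 'a::real_normed_vector \<times> 'b::real_normed_vector" assumes T: "0 < T"
  shows "CnS T n F \<Longrightarrow> CnS T n (\<lambda>p. fst (F p))"
proof (induction n arbitrary: F)
  case 0 thus ?case using okS_fst[OF T, of F] by (simp add: CnS_0)
next
  case (Suc n)
  have f: "okS T F" "CnS T n (dU F)" "CnS T n (dT T F)" using Suc.prems(1) by (auto simp: CnS_Suc)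
  show ?case by (rule CnS_SucI[OF okS_fst[OF T f(1)] Suc.IH[OF f(2)] Suc.IH[OF f(3)]])
qed

lemma CnS_snd: fixes F :: "real\<times>real \<Rightarrow> 'a::real_normed_vector \<times> 'b::real_normed_vector" assumes T: "0 < T"
  shows "CnS T n F \<Longrightarrow> CnS T n (\<lambda>p. snd (F p))"
proof (induction n arbitrary: F)
  case 0 thus ?case using okS_snd[OF T, of F] by (simp add: CnS_0)
next
  case (Suc n)
  have f: "okS T F" "CnS T n (dU F)" "CnS T n (dT T F)" using Suc.prems(1) by (auto simp: CnS_Suc)
  show ?case by (rule CnS_SucI[OF okS_snd[OF T f(1)] Suc.IH[OF f(2)] Suc.IH[OF f(3)]])
qed

lemma CnS_pair: fixes X Y :: "real\<times>real \<Rightarrow> real" assumes T: "0 < T"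
  shows "CnS T n X \<Longrightarrow> CnS T n Y \<Longrightarrow> CnS T n (\<lambda>p. (X p, Y p))"
proof (induction n arbitrary: X Y)
  case 0 thus ?case using okS_pair[OF T, of X Y] by (simp add: CnS_0)
next
  case (Suc n)
  have f: "okS T X" "CnS T n (dU X)" "CnS T n (dT T X)" using Suc.prems(1) by (auto simp: CnS_Suc)
  have g: "okS T Y" "CnS T n (dU Y)" "CnS T n (dT T Y)" using Suc.prems(2) by (auto simp: CnS_Suc)
  show ?case by (rule CnS_SucI[OF okS_pair[OF T f(1) g(1)] Suc.IH[OF f(2) g(2)] Suc.IH[OF f(3) g(3)]])
qed

abbreviation sm where "sm T f \<equiv> smooth_on_strip T f"

lemma sm_const: assumes "0 < T" shows "sm T (\<lambda>p. c)"
  unfolding smooth_CnS by (intro allI CnS_const[OF assms])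
lemma sm_add: assumes "0 < T" "sm T f" "sm T g" shows "sm T (\<lambda>p. f p + g p)"
  using assms(2,3) unfolding smooth_CnS by (intro allI CnS_add[OF assms(1)]) auto
lemma sm_mult: fixes f g :: "real\<times>real \<Rightarrow> real" assumes "0 < T" "sm T f" "sm T g" shows "sm T (\<lambda>p. f p * g p)"
  using assms(2,3) unfolding smooth_CnS by (intro allI CnS_mult[OF assms(1)]) auto
lemma sm_cmult: fixes g :: "real\<times>real \<Rightarrow> real" assumes "0 < T" "sm T g" shows "sm T (\<lambda>p. c * g p)"
  by (rule sm_mult[OF assms(1) sm_const[OF assms(1)] assms(2)])
lemma sm_minus: fixes g :: "real\<times>real \<Rightarrow> real" assumes "0 < T" "sm T g" shows "sm T (\<lambda>p. - g p)"
  using sm_cmult[OF assms, of "-1"] by simp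
lemma sm_diff: fixes f g :: "real\<times>real \<Rightarrow> real" assumes "0 < T" "sm T f" "sm T g" shows "sm T (\<lambda>p. f p - g p)"
  using sm_add[OF assms(1,2) sm_minus[OF assms(1,3)]] by simp
lemma sm_powr: fixes h :: "real\<times>real \<Rightarrow> real" assumes "0 < T" "\<And>p. p \<in> strip T \<Longrightarrow> h p > 0" "sm T h" shows "sm T (\<lambda>p. h p powr r)"
  using assms(3) unfolding smooth_CnS by (intro allI CnS_powr[OF assms(1,2)]) auto
lemma sm_fst: fixes F :: "real\<times>real \<Rightarrow> 'a::real_normed_vector \<times> 'b::real_normed_vector" assumes "0 < T" "sm T F" shows "sm T (\<lambda>p. fst (F p))"
  using assms(2) unfolding smooth_CnS by (intro allI CnS_fst[OF assms(1)]) auto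
lemma sm_snd: fixes F :: "real\<times>real \<Rightarrow> 'a::real_normed_vector \<times> 'b::real_normed_vector" assumes "0 < T" "sm T F" shows "sm T (\<lambda>p. snd (F p))"
  using assms(2) unfolding smooth_CnS by (intro allI CnS_snd[OF assms(1)]) auto
lemma sm_pair: fixes X Y :: "real\<times>real \<Rightarrow> real" assumes "0 < T" "sm T X" "sm T Y" shows "sm T (\<lambda>p. (X p, Y p))"
  using assms(2,3) unfolding smooth_CnS by (intro allI CnS_pair[OF assms(1)]) auto
lemma sm_dU: assumes "sm T f" shows "sm T (dU f)"
  unfolding smooth_CnS proof
  fix n show "CnS T n (dU f)" using assms[unfolded smooth_CnS, rule_format, of "Suc n"] by (simp add: CnS_Suc)
qed
lemma sm_dT: assumes "sm T f" shows "sm T (dT T f)"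
  unfolding smooth_CnS proof
  fix n show "CnS T n (dT T f)" using assms[unfolded smooth_CnS, rule_format, of "Suc n"] by (simp add: CnS_Suc)
qed
lemma sm_cong: assumes "eqS T f g" "sm T f" shows "sm T g"
  using assms(2) unfolding smooth_CnS by (intro allI CnS_cong[OF assms(1)]) auto
lemma sm_okS: assumes "sm T f" shows "okS T f"
  using assms[unfolded smooth_CnS, rule_format, of 0] by (simp add: CnS_0)



lemma schwarz:
  fixes f :: "real\<times>real \<Rightarrow> real"
  assumes T: "0 < T" and f: "sm T f" and p: "p \<in> strip T"
  shows "dT T (dU f) p = dU (dT T f) p"
proof -
  obtain u0 t0 where p0: "p = (u0, t0)" by (cases p)
  have u0: "u0 \<in> {-1..1}" and t0: "t0 \<in> {0..<T}" using p p0 by (auto simp: strip_iff)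
  define g where "g = dU f"
  define h where "h = dT T g"
  have okf: "okS T f" using sm_okS f by blast
  have okg: "okS T g" using sm_okS sm_dU f g_def by blast
  have okh: "okS T h" using sm_okS sm_dU sm_dT f g_def h_def by blast
  have cg: "continuous_on (strip T) g" using okS_cD okg by blast
  have ch: "continuous_on (strip T) h" using okS_cD okh by blast
  have cgs: "continuous_on {-1..1} (\<lambda>v. g (v, s))" if s: "s \<in> {0..<T}" for s
    by (rule continuous_on_compose2[OF cg]) (use s in \<open>auto intro!: continuous_intros simp: strip_iff\<close>)
  have chs: "continuous_on {-1..1} (\<lambda>v. h (v, s))" if s: "s \<in> {0..<T}" for s
    by (rule continuous_on_compose2[OF ch]) (use s in \<open>auto intro!: continuous_intros simp: strip_iff\<close>)
  have I: "f (u, s) = f (-1, s) + integral {-1..u} (\<lambda>v. g (v, s))"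
    if u: "u \<in> {-1..1}" and s: "s \<in> {0..<T}" for u s
  proof -
    have "((\<lambda>v. g (v, s)) has_integral f (u, s) - f (-1, s)) {-1..u}"
    proof (rule fundamental_theorem_of_calculus)
      show "-1 \<le> u" using u by simp
      fix x assume x: "x \<in> {-1..u}"
      hence xs: "(x, s) \<in> strip T" using u s by (auto simp: strip_iff)
      have sub: "{-1..u} \<subseteq> {-1..1}" using u by auto
      show "((\<lambda>v. f (v, s)) has_vector_derivative g (x, s)) (at x within {-1..u})"
        using has_vector_derivative_within_subset[OF okS_uD[OF okf xs] sub] by (simp add: g_def)
    qed
    hence "integral {-1..u} (\<lambda>v. g (v, s)) = f (u, s) - f (-1, s)" by (rule integral_unique)
    thus ?thesis by simp
  qed
  have L: "((\<lambda>s. integral (cbox (-1) u) (\<lambda>v. g (v, s))) has_vector_derivative integral (cbox (-1) u) (\<lambda>v. h (v, t0))) (at t0 within {0..<T})"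
    if u: "u \<in> {-1..1}" for u
  proof (rule leibniz_rule_vector_derivative[where f = "\<lambda>s v. g (v, s)" and fx = "\<lambda>s v. h (v, s)"])
    fix x t assume x: "x \<in> {0..<T}" and t: "t \<in> cbox (-1) u"
    hence xs: "(t, x) \<in> strip T" using u by (auto simp: strip_iff)
    show "((\<lambda>x. g (t, x)) has_vector_derivative h (t, x)) (at x within {0..<T})"
      using okS_tD[OF okg xs] by (simp add: h_def)
  next
    fix x assume x: "x \<in> {0..<T}"
    have "continuous_on (cbox (-1) u) (\<lambda>v. g (v, x))"
      by (rule continuous_on_subset[OF cgs[OF x]]) (use u in auto)
    thus "(\<lambda>v. g (v, x)) integrable_on cbox (-1) u" by (rule integrable_continuous)
  next
    have "continuous_on ({0..<T} \<times> cbox (-1) u) (\<lambda>z. h (snd z, fst z))"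
      by (rule continuous_on_compose2[OF ch]) (use u in \<open>auto intro!: continuous_intros simp: strip_iff\<close>)
    thus "continuous_on ({0..<T} \<times> cbox (-1) u) (\<lambda>(x, t). h (t, x))"
      by (simp add: split_beta)
  qed (use t0 in auto)
  have D: "dT T f (u, t0) = dT T f (-1, t0) + integral {-1..u} (\<lambda>v. h (v, t0))"
    if u: "u \<in> {-1..1}" for u
  proof (rule dT_eq[OF T])
    show "(u, t0) \<in> strip T" using u t0 by (simp add: strip_iff)
    have m1: "(-1, t0) \<in> strip T" using t0 by (simp add: strip_iff)
    have "((\<lambda>s. f (-1, s) + integral {-1..u} (\<lambda>v. g (v, s))) has_vector_derivative dT T f (-1, t0) + integral {-1..u} (\<lambda>v. h (v, t0))) (at t0 within {0..<T})"
      using has_vector_derivative_add[OF okS_tD[OF okf m1, simplified] L[OF u, unfolded cbox_interval]] by simp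
    from has_vector_derivative_transform[OF t0 I[OF u] this]
    show "((\<lambda>s. f (fst (u, t0), s)) has_vector_derivative dT T f (-1, t0) + integral {-1..u} (\<lambda>v. h (v, t0))) (at (snd (u, t0)) within {0..<T})"
      by simp
  qed
  have "((\<lambda>v. dT T f (-1, t0) + integral {-1..v} (\<lambda>v. h (v, t0))) has_vector_derivative h (u0, t0)) (at u0 within {-1..1})"
    using has_vector_derivative_add[OF has_vector_derivative_const integral_has_vector_derivative[OF chs[OF t0] u0]] by simp
  from has_vector_derivative_transform[OF u0 D this]
  have "((\<lambda>v. dT T f (v, t0)) has_vector_derivative h (u0, t0)) (at u0 within {-1..1})" .
  hence "dU (dT T f) p = h p" using dU_eq[OF p] p0 by simp
  thus ?thesis by (simp add: h_def g_def)
qed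



lemma dU_mult: fixes f g :: "real\<times>real \<Rightarrow> real"
  shows "0 < T \<Longrightarrow> sm T f \<Longrightarrow> sm T g \<Longrightarrow> p \<in> strip T \<Longrightarrow> dU (\<lambda>p. f p * g p) p = f p * dU g p + dU f p * g p"
  using okS_mult[OF _ sm_okS sm_okS] unfolding eqS_def by blast
lemma dT_mult: fixes f g :: "real\<times>real \<Rightarrow> real"
  shows "0 < T \<Longrightarrow> sm T f \<Longrightarrow> sm T g \<Longrightarrow> p \<in> strip T \<Longrightarrow> dT T (\<lambda>p. f p * g p) p = f p * dT T g p + dT T f p * g p"
  using okS_mult[OF _ sm_okS sm_okS] unfolding eqS_def by blast
lemma dU_add: fixes f g :: "real\<times>real \<Rightarrow> real"
  shows "0 < T \<Longrightarrow> sm T f \<Longrightarrow> sm T g \<Longrightarrow> p \<in> strip T \<Longrightarrow> dU (\<lambda>p. f p + g p) p = dU f p + dU g p"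
  using okS_add[OF _ sm_okS sm_okS] unfolding eqS_def by blast
lemma dT_add: fixes f g :: "real\<times>real \<Rightarrow> real"
  shows "0 < T \<Longrightarrow> sm T f \<Longrightarrow> sm T g \<Longrightarrow> p \<in> strip T \<Longrightarrow> dT T (\<lambda>p. f p + g p) p = dT T f p + dT T g p"
  using okS_add[OF _ sm_okS sm_okS] unfolding eqS_def by blast
lemma dU_const: "0 < T \<Longrightarrow> p \<in> strip T \<Longrightarrow> dU (\<lambda>p. c) p = 0"
  using okS_const unfolding eqS_def by blast
lemma dT_const: "0 < T \<Longrightarrow> p \<in> strip T \<Longrightarrow> dT T (\<lambda>p. c) p = 0"
  using okS_const unfolding eqS_def by blast
lemma dU_minus: fixes g :: "real\<times>real \<Rightarrow> real"
  shows "0 < T \<Longrightarrow> sm T g \<Longrightarrow> p \<in> strip T \<Longrightarrow> dU (\<lambda>p. - g p) p = - dU g p"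
  by (rule dU_eq) (auto intro!: has_vector_derivative_minus okS_uD sm_okS)
lemma dT_minus: fixes g :: "real\<times>real \<Rightarrow> real"
  shows "0 < T \<Longrightarrow> sm T g \<Longrightarrow> p \<in> strip T \<Longrightarrow> dT T (\<lambda>p. - g p) p = - dT T g p"
  by (rule dT_eq) (auto intro!: has_vector_derivative_minus okS_tD sm_okS)
lemma dU_diff: fixes f g :: "real\<times>real \<Rightarrow> real"
  shows "0 < T \<Longrightarrow> sm T f \<Longrightarrow> sm T g \<Longrightarrow> p \<in> strip T \<Longrightarrow> dU (\<lambda>p. f p - g p) p = dU f p - dU g p"
  by (rule dU_eq) (auto intro!: has_vector_derivative_diff okS_uD sm_okS)
lemma dT_diff: fixes f g :: "real\<times>real \<Rightarrow> real"
  shows "0 < T \<Longrightarrow> sm T f \<Longrightarrow> sm T g \<Longrightarrow> p \<in> strip T \<Longrightarrow> dT T (\<lambda>p. f p - g p) p = dT T f p - dT T g p"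
  by (rule dT_eq) (auto intro!: has_vector_derivative_diff okS_tD sm_okS)

lemma dT_line_zero:
  assumes T: "0 < T" and b: "b \<in> {-1..1}" and t: "t \<in> {0..<T}"
    and z: "\<And>s. s \<in> {0..<T} \<Longrightarrow> f (b, s) = (0::real)"
  shows "dT T f (b, t) = 0"
proof (rule dT_eq[OF T])
  show "(b, t) \<in> strip T" using b t by (simp add: strip_iff)
  from has_vector_derivative_transform[OF t z has_vector_derivative_const[of 0]]
  show "((\<lambda>s. f (fst (b, t), s)) has_vector_derivative 0) (at (snd (b, t)) within {0..<T})" by simp
qed

locale flow =
  fixes T :: real and \<alpha> :: "real\<times>real \<Rightarrow> real\<times>real"
  assumes T: "0 < T" and sma: "sm T \<alpha>" and nz: "\<And>p. p \<in> strip T \<Longrightarrow> dU \<alpha> p \<noteq> 0"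
    and ev: "\<And>p. p \<in> strip T \<Longrightarrow> dT T \<alpha> p = curv_s \<alpha> 2 p *\<^sub>R normal \<alpha> p"
begin

definition "a = (\<lambda>p. fst (\<alpha> p))"
definition "b = (\<lambda>p. snd (\<alpha> p))"
definition "A = dU a"
definition "B = dU b"
definition "Q = (\<lambda>p. A p * A p + B p * B p)"
definition "M = (\<lambda>p. Q p powr (-1/2))"
definition "Ds g = (\<lambda>p. M p * dU g p)"
definition "X = (\<lambda>p. M p * A p)"
definition "Y = (\<lambda>p. M p * B p)"
definition "k0 = (\<lambda>p. Y p * Ds X p - X p * Ds Y p)"
definition "kk m = (Ds ^^ m) k0"

lemma kk_Suc: "kk (Suc m) = Ds (kk m)" by (simp add: kk_def)
lemma kk_0: "kk 0 = k0" by (simp add: kk_def)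

lemma sm_a: "sm T a" unfolding a_def by (rule sm_fst[OF T sma])
lemma sm_b: "sm T b" unfolding b_def by (rule sm_snd[OF T sma])
lemma sm_A: "sm T A" unfolding A_def by (rule sm_dU[OF sm_a])
lemma sm_B: "sm T B" unfolding B_def by (rule sm_dU[OF sm_b])

lemma dU_alpha: "p \<in> strip T \<Longrightarrow> dU \<alpha> p = (A p, B p)"
  using okS_fst[OF T sm_okS[OF sma]] okS_snd[OF T sm_okS[OF sma]]
  unfolding eqS_def A_def B_def a_def b_def by (metis prod.collapse)

lemma dT_alpha_ab: "p \<in> strip T \<Longrightarrow> dT T a p = fst (dT T \<alpha> p) \<and> dT T b p = snd (dT T \<alpha> p)"
  using okS_fst[OF T sm_okS[OF sma]] okS_snd[OF T sm_okS[OF sma]]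
  unfolding eqS_def a_def b_def by blast

lemma Q_pos: "p \<in> strip T \<Longrightarrow> Q p > 0"
proof -
  assume p: "p \<in> strip T"
  have "(A p, B p) \<noteq> 0" using nz[OF p] dU_alpha[OF p] by simp
  hence "A p \<noteq> 0 \<or> B p \<noteq> 0" by (auto simp: zero_prod_def)
  thus "Q p > 0" unfolding Q_def by (metis add_pos_nonneg add_nonneg_pos zero_le_square not_real_square_gt_zero)
qed

lemma sm_Q: "sm T Q" unfolding Q_def by (intro sm_add[OF T] sm_mult[OF T] sm_A sm_B)
lemma sm_M: "sm T M" unfolding M_def by (rule sm_powr[OF T Q_pos sm_Q])
lemma sm_Ds: "sm T g \<Longrightarrow> sm T (Ds g)" unfolding Ds_def by (intro sm_mult[OF T] sm_M sm_dU)
lemma sm_X: "sm T X" unfolding X_def by (intro sm_mult[OF T] sm_M sm_A)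
lemma sm_Y: "sm T Y" unfolding Y_def by (intro sm_mult[OF T] sm_M sm_B)
lemma sm_k0: "sm T k0" unfolding k0_def by (intro sm_diff[OF T] sm_mult[OF T] sm_X sm_Y sm_Ds)
lemma sm_kk: "sm T (kk m)" by (induction m) (simp_all add: kk_0 kk_Suc sm_k0 sm_Ds)

lemma M_pos: assumes p: "p \<in> strip T" shows "M p > 0"
proof -
  have "Q p > 0" using Q_pos[OF p] .
  thus ?thesis unfolding M_def by simp
qed

lemma MMQ: "p \<in> strip T \<Longrightarrow> M p * M p * Q p = 1"
proof -
  assume p: "p \<in> strip T"
  have q: "Q p > 0" using Q_pos[OF p] .
  have "M p * M p = Q p powr (-1)" unfolding M_def by (simp add: powr_add[symmetric])
  also have "\<dots> = inverse (Q p)" using q by (simp add: powr_minus)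
  finally show ?thesis using q by simp
qed

lemma norm_dU: "p \<in> strip T \<Longrightarrow> inverse (norm (dU \<alpha> p)) = M p"
proof -
  assume p: "p \<in> strip T"
  have q: "Q p > 0" using Q_pos[OF p] .
  have "norm (dU \<alpha> p) = sqrt (Q p)" using dU_alpha[OF p] by (simp add: norm_Pair Q_def power2_eq_square)
  also have "\<dots> = Q p powr (1/2)" using q by (simp add: powr_half_sqrt)
  finally show ?thesis unfolding M_def by (simp add: powr_minus[symmetric])
qed

lemma dS_real: fixes g :: "real\<times>real \<Rightarrow> real" shows "p \<in> strip T \<Longrightarrow> dS \<alpha> g p = Ds g p"
  unfolding dS_def Ds_def by (simp add: norm_dU)

lemma dS_alpha: "eqS T (dS \<alpha> \<alpha>) (\<lambda>p. (X p, Y p))"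
  unfolding eqS_def
proof
  fix p assume p: "p \<in> strip T"
  have "dS \<alpha> \<alpha> p = M p *\<^sub>R dU \<alpha> p" unfolding dS_def by (simp only: norm_dU[OF p])
  thus "dS \<alpha> \<alpha> p = (X p, Y p)" by (simp add: dU_alpha[OF p] X_def Y_def)
qed

lemma normal_eq: "p \<in> strip T \<Longrightarrow> normal \<alpha> p = (- Y p, X p)"
  using dS_alpha unfolding eqS_def normal_def tangent_def rotJ_def by simp

lemma curv_eq: "eqS T (curv \<alpha>) k0"
  unfolding eqS_def
proof
  fix p assume p: "p \<in> strip T"
  have "dU (dS \<alpha> \<alpha>) p = dU (\<lambda>p. (X p, Y p)) p" by (rule dU_cong[OF dS_alpha p])
  also have "\<dots> = (dU X p, dU Y p)" using okS_pair[OF T sm_okS[OF sm_X] sm_okS[OF sm_Y]] p unfolding eqS_def by blast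
  finally have "dS \<alpha> (dS \<alpha> \<alpha>) p = M p *\<^sub>R (dU X p, dU Y p)" unfolding dS_def by (simp add: norm_dU p)
  thus "curv \<alpha> p = k0 p" unfolding curv_def k0_def Ds_def using normal_eq[OF p] by (simp add: algebra_simps)
qed

lemma curv_s_eq: "eqS T (curv_s \<alpha> m) (kk m)"
proof (induction m)
  case 0 thus ?case using curv_eq by (simp add: curv_s_def kk_0)
next
  case (Suc m)
  show ?case unfolding eqS_def
  proof
    fix p assume p: "p \<in> strip T"
    have "curv_s \<alpha> (Suc m) p = dS \<alpha> (curv_s \<alpha> m) p" by (simp add: curv_s_def)
    also have "\<dots> = Ds (curv_s \<alpha> m) p" by (rule dS_real[OF p])
    also have "\<dots> = Ds (kk m) p" unfolding Ds_def using dU_cong[OF Suc.IH p] by simp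
    finally show "curv_s \<alpha> (Suc m) p = kk (Suc m) p" by (simp add: kk_Suc)
  qed
qed

lemma dT_a: "eqS T (dT T a) (\<lambda>p. - (kk 2 p * Y p))"
  unfolding eqS_def using dT_alpha_ab ev normal_eq curv_s_eq[of 2] unfolding eqS_def by simp
lemma dT_b: "eqS T (dT T b) (\<lambda>p. kk 2 p * X p)"
  unfolding eqS_def using dT_alpha_ab ev normal_eq curv_s_eq[of 2] unfolding eqS_def by simp

end



context flow begin

lemmas smr = sm_mult[OF T] sm_add[OF T] sm_diff[OF T] sm_minus[OF T] sm_const[OF T]
  sm_A sm_B sm_Q sm_M sm_X sm_Y sm_k0 sm_kk sm_Ds sm_dU sm_dT sm_a sm_b
lemmas dr = dU_mult[OF T] dT_mult[OF T] dU_add[OF T] dT_add[OF T] dU_diff[OF T] dT_diff[OF T]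
  dU_minus[OF T] dT_minus[OF T] dU_const[OF T] dT_const[OF T]

lemma XY1: "p \<in> strip T \<Longrightarrow> X p * X p + Y p * Y p = 1"
  using MMQ[of p] unfolding X_def Y_def Q_def by (simp add: algebra_simps)

lemma XdX: assumes p: "p \<in> strip T" shows "X p * dU X p + Y p * dU Y p = 0"
proof -
  have e: "eqS T (\<lambda>p. X p * X p + Y p * Y p) (\<lambda>p. 1)" using XY1 unfolding eqS_def by blast
  have "dU (\<lambda>p. X p * X p + Y p * Y p) p = dU (\<lambda>p. 1) p" by (rule dU_cong[OF e p])
  hence "X p * dU X p + dU X p * X p + (Y p * dU Y p + dU Y p * Y p) = 0"
    using p by (simp add: dr smr)
  thus ?thesis by (simp add: algebra_simps)
qed

lemma DsX: assumes p: "p \<in> strip T" shows "M p * dU X p = k0 p * Y p"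
proof -
  have h1: "X p * X p + Y p * Y p = 1" by (rule XY1[OF p])
  have h2: "X p * dU X p + Y p * dU Y p = 0" by (rule XdX[OF p])
  have h3: "k0 p = Y p * (M p * dU X p) - X p * (M p * dU Y p)" by (simp add: k0_def Ds_def)
  show ?thesis using h1 h2 h3 by algebra
qed

lemma DsY: assumes p: "p \<in> strip T" shows "M p * dU Y p = - k0 p * X p"
proof -
  have h1: "X p * X p + Y p * Y p = 1" by (rule XY1[OF p])
  have h2: "X p * dU X p + Y p * dU Y p = 0" by (rule XdX[OF p])
  have h3: "k0 p = Y p * (M p * dU X p) - X p * (M p * dU Y p)" by (simp add: k0_def Ds_def)
  show ?thesis using h1 h2 h3 by algebra
qed

lemma dT_A: assumes p: "p \<in> strip T" shows "dT T A p = - (kk 2 p * dU Y p + dU (kk 2) p * Y p)"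
proof -
  have "dT T A p = dU (dT T a) p" unfolding A_def by (rule schwarz[OF T sm_a p])
  also have "\<dots> = dU (\<lambda>p. - (kk 2 p * Y p)) p" by (rule dU_cong[OF dT_a p])
  also have "\<dots> = - (kk 2 p * dU Y p + dU (kk 2) p * Y p)" using p by (simp add: dr smr)
  finally show ?thesis .
qed

lemma dT_B: assumes p: "p \<in> strip T" shows "dT T B p = kk 2 p * dU X p + dU (kk 2) p * X p"
proof -
  have "dT T B p = dU (dT T b) p" unfolding B_def by (rule schwarz[OF T sm_b p])
  also have "\<dots> = dU (\<lambda>p. kk 2 p * X p) p" by (rule dU_cong[OF dT_b p])
  also have "\<dots> = kk 2 p * dU X p + dU (kk 2) p * X p" using p by (simp add: dr smr)
  finally show ?thesis .
qed

lemma dT_M: assumes p: "p \<in> strip T" shows "dT T M p = - M p * kk 2 p * k0 p"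
proof -
  have e: "eqS T (\<lambda>p. M p * M p * Q p) (\<lambda>p. 1)" using MMQ unfolding eqS_def by blast
  have "dT T (\<lambda>p. M p * M p * Q p) p = dT T (\<lambda>p. 1) p" by (rule dT_cong[OF e p])
  hence h1: "M p * M p * dT T Q p + (M p * dT T M p + dT T M p * M p) * Q p = 0"
    using p by (simp add: dr smr)
  have h2: "dT T Q p = A p * dT T A p + dT T A p * A p + (B p * dT T B p + dT T B p * B p)"
    unfolding Q_def using p by (simp add: dr smr)
  have h3: "dT T A p = - (kk 2 p * dU Y p + dU (kk 2) p * Y p)" by (rule dT_A[OF p])
  have h4: "dT T B p = kk 2 p * dU X p + dU (kk 2) p * X p" by (rule dT_B[OF p])
  have h5: "k0 p = Y p * (M p * dU X p) - X p * (M p * dU Y p)" by (simp add: k0_def Ds_def)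
  have h6: "X p = M p * A p" "Y p = M p * B p" by (simp_all add: X_def Y_def)
  have h0: "M p * M p * Q p = 1" by (rule MMQ[OF p])
  show ?thesis using h0 h1 h2 h3 h4 h5 h6 by algebra
qed

lemma dT_Ds: assumes g: "sm T g" and p: "p \<in> strip T"
  shows "dT T (Ds g) p = - kk 2 p * k0 p * Ds g p + Ds (dT T g) p"
proof -
  have "dT T (Ds g) p = M p * dT T (dU g) p + dT T M p * dU g p"
    unfolding Ds_def using p g by (simp add: dr smr)
  also have "dT T (dU g) p = dU (dT T g) p" by (rule schwarz[OF T g p])
  finally show ?thesis using dT_M[OF p] by (simp add: Ds_def algebra_simps)
qed

lemma kk3: "p \<in> strip T \<Longrightarrow> kk 3 p = M p * dU (kk 2) p"
  by (simp add: kk_Suc numeral_3_eq_3 numeral_2_eq_2 Ds_def)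

lemma dT_X: assumes p: "p \<in> strip T" shows "dT T X p = - kk 3 p * Y p"
proof -
  have h1: "dT T X p = M p * dT T A p + dT T M p * A p" unfolding X_def using p by (simp add: dr smr)
  have h2: "dT T A p = - (kk 2 p * dU Y p + dU (kk 2) p * Y p)" by (rule dT_A[OF p])
  have h3: "dT T M p = - M p * kk 2 p * k0 p" by (rule dT_M[OF p])
  have h4: "M p * dU Y p = - k0 p * X p" by (rule DsY[OF p])
  have h5: "kk 3 p = M p * dU (kk 2) p" by (rule kk3[OF p])
  have h6: "X p = M p * A p" "Y p = M p * B p" by (simp_all add: X_def Y_def)
  show ?thesis using h1 h2 h3 h4 h5 h6 by algebra
qed

lemma dT_Y: assumes p: "p \<in> strip T" shows "dT T Y p = kk 3 p * X p"
proof -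
  have h1: "dT T Y p = M p * dT T B p + dT T M p * B p" unfolding Y_def using p by (simp add: dr smr)
  have h2: "dT T B p = kk 2 p * dU X p + dU (kk 2) p * X p" by (rule dT_B[OF p])
  have h3: "dT T M p = - M p * kk 2 p * k0 p" by (rule dT_M[OF p])
  have h4: "M p * dU X p = k0 p * Y p" by (rule DsX[OF p])
  have h5: "kk 3 p = M p * dU (kk 2) p" by (rule kk3[OF p])
  have h6: "X p = M p * A p" "Y p = M p * B p" by (simp_all add: X_def Y_def)
  show ?thesis using h1 h2 h3 h4 h5 h6 by algebra
qed

lemma dT_k0: assumes p: "p \<in> strip T" shows "dT T k0 p = - kk 4 p - k0 p * k0 p * kk 2 p"
proof -
  have eX: "eqS T (dT T X) (\<lambda>p. - (kk 3 p * Y p))" using dT_X unfolding eqS_def by simp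
  have eY: "eqS T (dT T Y) (\<lambda>p. kk 3 p * X p)" using dT_Y unfolding eqS_def by simp
  have h1: "dT T k0 p = Y p * dT T (Ds X) p + dT T Y p * Ds X p - (X p * dT T (Ds Y) p + dT T X p * Ds Y p)"
    unfolding k0_def using p by (simp add: dr smr)
  have h2: "dT T (Ds X) p = - kk 2 p * k0 p * Ds X p + M p * dU (dT T X) p"
    using dT_Ds[OF sm_X p] by (simp add: Ds_def)
  have h3: "dT T (Ds Y) p = - kk 2 p * k0 p * Ds Y p + M p * dU (dT T Y) p"
    using dT_Ds[OF sm_Y p] by (simp add: Ds_def)
  have h4: "dU (dT T X) p = - (kk 3 p * dU Y p + dU (kk 3) p * Y p)"
    using dU_cong[OF eX p] p by (simp add: dr smr)
  have h5: "dU (dT T Y) p = kk 3 p * dU X p + dU (kk 3) p * X p"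
    using dU_cong[OF eY p] p by (simp add: dr smr)
  have h6: "kk 4 p = M p * dU (kk 3) p"
    by (simp add: kk_Suc numeral_3_eq_3 numeral_2_eq_2 eval_nat_numeral Ds_def)
  have h7: "Ds X p = M p * dU X p" "Ds Y p = M p * dU Y p" by (simp_all add: Ds_def)
  have h8: "M p * dU X p = k0 p * Y p" by (rule DsX[OF p])
  have h9: "M p * dU Y p = - k0 p * X p" by (rule DsY[OF p])
  have h10: "X p * X p + Y p * Y p = 1" by (rule XY1[OF p])
  have h11: "dT T X p = - kk 3 p * Y p" by (rule dT_X[OF p])
  have h12: "dT T Y p = kk 3 p * X p" by (rule dT_Y[OF p])
  show ?thesis using h1 h2 h3 h4 h5 h6 h7 h8 h9 h10 h11 h12 by algebra
qed

lemma dT_kk_Suc: assumes p: "p \<in> strip T"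
  shows "dT T (kk (Suc m)) p = - kk 2 p * k0 p * kk (Suc m) p + Ds (dT T (kk m)) p"
  using dT_Ds[OF sm_kk p, of m] by (simp add: kk_Suc)

end



datatype ex = K nat | Cn real | Ad ex ex | Mu ex ex

fun dsx :: "ex \<Rightarrow> ex" where
  "dsx (K j) = K (Suc j)"
| "dsx (Cn c) = Mu (Cn 0) (K 1)"
| "dsx (Ad a b) = Ad (dsx a) (dsx b)"
| "dsx (Mu a b) = Ad (Mu a (dsx b)) (Mu (dsx a) b)"

fun par :: "ex \<Rightarrow> bool" where
  "par (K j) = odd j"
| "par (Cn c) = False"
| "par (Ad a b) = par a"
| "par (Mu a b) = (par a \<noteq> par b)"

fun wf :: "nat \<Rightarrow> ex \<Rightarrow> bool" where
  "wf N (K j) = (j \<le> N)"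
| "wf N (Cn c) = True"
| "wf N (Ad a b) = (wf N a \<and> wf N b \<and> par a = par b)"
| "wf N (Mu a b) = (wf N a \<and> wf N b)"

lemma wf_mono: "wf N e \<Longrightarrow> N \<le> N' \<Longrightarrow> wf N' e"
  by (induction e) auto

lemma par_dsx: "wf N e \<Longrightarrow> par (dsx e) = (\<not> par e)"
  by (induction e) auto

lemma wf_dsx: "wf N e \<Longrightarrow> wf (Suc N) (dsx e)"
  by (induction e) (auto simp: par_dsx intro: wf_mono)

fun Qx :: "nat \<Rightarrow> ex" where
  "Qx 0 = Mu (Cn (-1)) (Mu (Mu (K 0) (K 0)) (K 2))"
| "Qx (Suc m) = Ad (dsx (Qx m)) (Mu (Cn (-1)) (Mu (Mu (K 2) (K 0)) (K (Suc m))))"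

lemma Qx_props: "wf (m + 2) (Qx m) \<and> par (Qx m) = odd m"
proof (induction m)
  case 0 thus ?case by simp
next
  case (Suc m)
  have w: "wf (Suc m + 2) (dsx (Qx m))" using wf_dsx[of "m+2" "Qx m"] Suc by simp
  have p: "par (dsx (Qx m)) = odd (Suc m)" using par_dsx[of "m+2" "Qx m"] Suc by simp
  show ?case using w p by simp
qed

context flow begin

fun evx :: "ex \<Rightarrow> real\<times>real \<Rightarrow> real" where
  "evx (K j) = kk j"
| "evx (Cn c) = (\<lambda>p. c)"
| "evx (Ad e1 e2) = (\<lambda>p. evx e1 p + evx e2 p)"
| "evx (Mu e1 e2) = (\<lambda>p. evx e1 p * evx e2 p)"

lemma sm_evx: "sm T (evx e)"
  by (induction e) (auto intro: smr)

lemma evx_dsx: "p \<in> strip T \<Longrightarrow> evx (dsx e) p = Ds (evx e) p"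
proof (induction e)
  case (K j) thus ?case by (simp add: kk_Suc)
next
  case (Cn c) thus ?case by (simp add: Ds_def dr)
next
  case (Ad e1 e2) thus ?case by (simp add: Ds_def dr sm_evx algebra_simps)
next
  case (Mu e1 e2) thus ?case by (simp add: Ds_def dr sm_evx algebra_simps)
qed

lemma evx_zero: "wf N e \<Longrightarrow> par e \<Longrightarrow> (\<And>j. j \<le> N \<Longrightarrow> odd j \<Longrightarrow> kk j p = 0) \<Longrightarrow> evx e p = 0"
  by (induction e) auto

lemma dT_kk: "p \<in> strip T \<Longrightarrow> dT T (kk m) p = evx (Qx m) p - kk (m + 4) p"
proof (induction m arbitrary: p)
  case 0 thus ?case using dT_k0 by (simp add: kk_0)
next
  case (Suc m)
  have e: "eqS T (dT T (kk m)) (\<lambda>p. evx (Qx m) p - kk (m + 4) p)" using Suc.IH unfolding eqS_def by blast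
  have "Ds (dT T (kk m)) p = M p * dU (\<lambda>p. evx (Qx m) p - kk (m + 4) p) p"
    unfolding Ds_def using dU_cong[OF e Suc.prems] by simp
  also have "\<dots> = Ds (evx (Qx m)) p - Ds (kk (m + 4)) p"
    using Suc.prems by (simp add: Ds_def dr sm_evx sm_kk algebra_simps)
  also have "\<dots> = evx (dsx (Qx m)) p - kk (Suc m + 4) p"
  proof -
    have "kk (Suc m + 4) = Ds (kk (m + 4))" using kk_Suc[of "m + 4"] by (simp only: add_Suc)
    thus ?thesis using evx_dsx[OF Suc.prems, of "Qx m"] by simp
  qed
  finally show ?case using dT_kk_Suc[OF Suc.prems, of m] by (simp add: kk_0 algebra_simps)
qed

lemma kk3_bd:
  assumes bb: "bb \<in> {-1..1}" and t: "t \<in> {0..<T}"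
    and nb: "\<And>s. s \<in> {0..<T} \<Longrightarrow> \<exists>c. normal \<alpha> (bb, s) = c *\<^sub>R (cos th, sin th)"
  shows "kk 3 (bb, t) = 0"
proof -
  define Z where "Z = (\<lambda>p. X p * cos th + Y p * sin th)"
  have z: "Z (bb, s) = 0" if s: "s \<in> {0..<T}" for s
  proof -
    obtain c where c: "normal \<alpha> (bb, s) = c *\<^sub>R (cos th, sin th)" using nb[OF s] by blast
    have "(bb, s) \<in> strip T" using bb s by (simp add: strip_iff)
    hence "- Y (bb, s) = c * cos th" "X (bb, s) = c * sin th" using c normal_eq by auto
    thus ?thesis unfolding Z_def by algebra
  qed
  have p: "(bb, t) \<in> strip T" using bb t by (simp add: strip_iff)
  have "dT T Z (bb, t) = 0" by (rule dT_line_zero[where f=Z, OF T bb t z])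
  moreover have "dT T Z (bb, t) = dT T X (bb, t) * cos th + dT T Y (bb, t) * sin th"
    unfolding Z_def using p by (simp add: dr smr)
  ultimately have h: "- kk 3 (bb, t) * Y (bb, t) * cos th + kk 3 (bb, t) * X (bb, t) * sin th = 0"
    using dT_X[OF p] dT_Y[OF p] by simp
  obtain c where c: "normal \<alpha> (bb, t) = c *\<^sub>R (cos th, sin th)" using nb[OF t] by blast
  hence xy: "- Y (bb, t) = c * cos th" "X (bb, t) = c * sin th" using c normal_eq[OF p] by auto
  have one: "X (bb, t) * X (bb, t) + Y (bb, t) * Y (bb, t) = 1" by (rule XY1[OF p])
  have cs: "cos th * cos th + sin th * sin th = 1" using sin_cos_squared_add[of th] by (simp add: power2_eq_square)
  have "kk 3 (bb, t) * c = 0" using h xy cs by algebra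
  moreover have "c \<noteq> 0" using one xy by auto
  ultimately show ?thesis by simp
qed

lemma odd_zero:
  assumes bb: "bb \<in> {-1..1}"
    and h1: "\<And>t. t \<in> {0..<T} \<Longrightarrow> kk 1 (bb, t) = 0"
    and h3: "\<And>t. t \<in> {0..<T} \<Longrightarrow> kk 3 (bb, t) = 0"
  shows "odd j \<Longrightarrow> t \<in> {0..<T} \<Longrightarrow> kk j (bb, t) = 0"
proof (induction j arbitrary: t rule: less_induct)
  case (less j)
  show ?case
  proof (cases "j \<le> 3")
    case True
    hence "j = 1 \<or> j = 3" using less.prems(1) by presburger
    thus ?thesis using h1 h3 less.prems(2) by auto
  next
    case False
    define m where "m = j - 4"
    have jm: "j = m + 4" and om: "odd m" using False less.prems(1) unfolding m_def by presburger+
    have p: "(bb, t) \<in> strip T" using bb less.prems(2) by (simp add: strip_iff)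
    have "dT T (kk m) (bb, t) = 0"
      by (rule dT_line_zero[OF T bb less.prems(2)]) (use less.IH[of m] jm om in auto)
    hence e: "evx (Qx m) (bb, t) = kk j (bb, t)" using dT_kk[OF p, of m] jm by simp
    have "evx (Qx m) (bb, t) = 0"
    proof (rule evx_zero)
      show "wf (m + 2) (Qx m)" using Qx_props by blast
      show "par (Qx m)" using Qx_props om by blast
      fix i assume "i \<le> m + 2" "odd i"
      thus "kk i (bb, t) = 0" using less.IH[of i] jm less.prems(2) by auto
    qed
    thus ?thesis using e by simp
  qed
qed

end


theorem lemma3p2:
  fixes \<theta>1 \<theta>2 T :: real and \<alpha> :: "real \<times> real \<Rightarrow> real \<times> real"
  assumes "0 \<le> \<theta>2" and "\<theta>2 < \<theta>1" and "\<theta>1 < pi"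
    and "0 < T"
    and "CDF_GNBC \<theta>1 \<theta>2 T \<alpha>"
  shows "\<forall>l::nat. l \<ge> 1 \<longrightarrow> (\<forall>t\<in>{0..<T}.
           curv_s \<alpha> (2 * l - 1) (-1, t) = 0 \<and> curv_s \<alpha> (2 * l - 1) (1, t) = 0)"
proof -
  have C: "smooth_on_strip T \<alpha>" "\<forall>p\<in>strip T. dU \<alpha> p \<noteq> 0"
     "\<forall>p\<in>strip T. dT T \<alpha> p = curv_s \<alpha> 2 p *\<^sub>R normal \<alpha> p"
     "\<forall>t\<in>{0..<T}.
        \<alpha> (-1, t) \<in> ray \<theta>1 \<and> \<alpha> (1, t) \<in> ray \<theta>2 \<and>
        (\<exists>c. normal \<alpha> (-1, t) = c *\<^sub>R (cos \<theta>1, sin \<theta>1)) \<and>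
        (\<exists>c. normal \<alpha> (1, t) = c *\<^sub>R (cos \<theta>2, sin \<theta>2)) \<and>
        curv_s \<alpha> 1 (-1, t) = 0 \<and> curv_s \<alpha> 1 (1, t) = 0"
    using assms(5) unfolding CDF_GNBC_def by blast+
  interpret fl: flow T \<alpha>
    using assms(4) C(1,2,3) by unfold_locales auto
  have key: "fl.kk j (bb, t) = 0"
    if bb: "bb \<in> {-1..1}" and j: "odd j" and t: "t \<in> {0..<T}"
      and h1: "\<And>t. t \<in> {0..<T} \<Longrightarrow> curv_s \<alpha> 1 (bb, t) = 0"
      and nb: "\<And>s. s \<in> {0..<T} \<Longrightarrow> \<exists>c. normal \<alpha> (bb, s) = c *\<^sub>R (cos th, sin th)"
    for bb j t th
  proof (rule fl.odd_zero[OF bb _ _ j t])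
    fix t assume t: "t \<in> {0..<T}"
    have p: "(bb, t) \<in> strip T" using bb t by (simp add: strip_iff)
    show "fl.kk 1 (bb, t) = 0" using fl.curv_s_eq[of 1] h1[OF t] p unfolding eqS_def by simp
    show "fl.kk 3 (bb, t) = 0" by (rule fl.kk3_bd[OF bb t nb])
  qed
  show ?thesis
  proof (intro allI impI ballI conjI)
    fix l :: nat and t assume l: "1 \<le> l" and t: "t \<in> {0..<T}"
    have o: "odd (2 * l - 1)" using l by presburger
    have pm: "(-1, t) \<in> strip T" and pp: "(1, t) \<in> strip T" using t by (simp_all add: strip_iff)
    have "fl.kk (2 * l - 1) (-1, t) = 0"
      by (rule key[where th = \<theta>1]) (use o t C(4) in auto)
    thus "curv_s \<alpha> (2 * l - 1) (-1, t) = 0" using fl.curv_s_eq[of "2 * l - 1"] pm unfolding eqS_def by simp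
    have "fl.kk (2 * l - 1) (1, t) = 0"
      by (rule key[where th = \<theta>2]) (use o t C(4) in auto)
    thus "curv_s \<alpha> (2 * l - 1) (1, t) = 0" using fl.curv_s_eq[of "2 * l - 1"] pp unfolding eqS_def by simp
  qed
qed

end
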